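(* Let $m\in[1..\frac n2-1]$ and let $\tau=(\tau_i)_{i\in[1..n]}\in\{\frac1n,\frac12,1-\frac1n\}^n$. Let $x,y\in\{0,1\}^n$ be sampled independently from the distribution associated with $\tau$, and let $z$ be the winner of $x$ and $y$ with respect to $\mathrm{DLB}$ (the one with larger $\mathrm{DLB}$-value, chosen uniformly at random among the two in case of a tie). Then, conditioned on $\{\min\{\mathrm{DLB}(x),\mathrm{DLB}(y)\}\ge 2m\}$, we have $z_{2m+1}=1$ with probability $$p(\tau_{2m+1},\tau_{2m+2})=\tau_{2m+1}\left(-\tau_{2m+2}^2+3\tau_{2m+2}+(\tau_{2m+2}^2-3\tau_{2m+2}+1)\tau_{2m+1}\right).$$ If $\tau_{2m+1},\tau_{2m+2}\in\{\frac12,1-\frac1n\}$, then $p(\tau_{2m+1},\tau_{2m+2})\ge\tau_{2m+1}$. If moreover $\tau_{2m+1}=\frac12$ and $\tau_{2m+2}\in\{\frac12,1-\frac1n\}$, then $p(\tau_{2m+1},\tau_{2m+2})\ge\frac9{16}$.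
   Context: Let $n$ be an even positive integer. For $x\in\{0,1\}^n$ consider the blocks $(x_{2\ell+1},x_{2\ell+2})$, $\ell=0,\dots,\frac n2-1$. If $x\neq(1,\dots,1)$, let $m$ be the smallest $\ell$ with $x_{2\ell+1}\neq 1$ or $x_{2\ell+2}\neq 1$, and define $\mathrm{DLB}(x)=2m+1$ if $x_{2m+1}+x_{2m+2}=0$ and $\mathrm{DLB}(x)=2m$ if $x_{2m+1}+x_{2m+2}=1$; set $\mathrm{DLB}(1,\dots,1)=n$. The distribution on $\{0,1\}^n$ associated with a frequency vector $\tau\in[0,1]^n$ is the one in which each bit $x_i$ is independently $1$ with probability $\tau_i$ and $0$ otherwise. *)

theory Defs
  imports "HOL-Probability.Probability"
begin

text \<open>Bit strings x in {0,1}^n are functions nat => bool, indexed 1..n (True = 1).\<close>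

definition DLB :: "nat \<Rightarrow> (nat \<Rightarrow> bool) \<Rightarrow> nat" where
  "DLB n x =
     (if (\<forall>l < n div 2. x (2*l+1) \<and> x (2*l+2)) then n
      else (let k = (LEAST l. \<not> (x (2*l+1) \<and> x (2*l+2))) in
            if \<not> x (2*k+1) \<and> \<not> x (2*k+2) then 2*k+1 else 2*k))"

definition freq_dist :: "nat \<Rightarrow> (nat \<Rightarrow> real) \<Rightarrow> (nat \<Rightarrow> bool) pmf" where
  "freq_dist n \<tau> = Pi_pmf {1..n} False (\<lambda>i. bernoulli_pmf (\<tau> i))"

definition winner :: "nat \<Rightarrow> (nat \<Rightarrow> bool) \<Rightarrow> (nat \<Rightarrow> bool) \<Rightarrow> (nat \<Rightarrow> bool) pmf" where
  "winner n x y =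
     (if DLB n x > DLB n y then return_pmf x
      else if DLB n y > DLB n x then return_pmf y
      else map_pmf (\<lambda>b. if b then x else y) (bernoulli_pmf (1/2)))"

definition tournament :: "nat \<Rightarrow> (nat \<Rightarrow> real) \<Rightarrow> ((nat \<Rightarrow> bool) \<times> (nat \<Rightarrow> bool) \<times> (nat \<Rightarrow> bool)) pmf" where
  "tournament n \<tau> =
     do { x \<leftarrow> freq_dist n \<tau>; y \<leftarrow> freq_dist n \<tau>; z \<leftarrow> winner n x y; return_pmf (x, y, z) }"

definition cond_prob :: "'a pmf \<Rightarrow> 'a set \<Rightarrow> 'a set \<Rightarrow> real" where
  "cond_prob M A B = measure_pmf.prob M (A \<inter> B) / measure_pmf.prob M B"

definition p_fun :: "real \<Rightarrow> real \<Rightarrow> real" where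
  "p_fun a t = a * (- (t^2) + 3*t + (t^2 - 3*t + 1) * a)"

end

theory Submission
  imports Defs
begin

definition gok :: "nat \<Rightarrow> (nat \<Rightarrow> bool) \<Rightarrow> bool" where
  "gok m x = (\<forall>l<m. x (2*l+1) \<and> x (2*l+2))"

lemma D1:
  assumes "m < n div 2"
  shows "(2*m \<le> DLB n x) \<longleftrightarrow> gok m x"
proof (cases "\<forall>l < n div 2. x (2*l+1) \<and> x (2*l+2)")
  case True
  then show ?thesis using assms by (auto simp: DLB_def gok_def)
next
  case False
  define k where "k = (LEAST l. \<not> (x (2*l+1) \<and> x (2*l+2)))"
  have ex: "\<exists>l. \<not> (x (2*l+1) \<and> x (2*l+2))" using False by auto
  have k1: "\<not> (x (2*k+1) \<and> x (2*k+2))" unfolding k_def by (rule LeastI_ex[OF ex])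
  have k2: "\<And>l. l < k \<Longrightarrow> x (2*l+1) \<and> x (2*l+2)" unfolding k_def using not_less_Least by blast
  have D: "DLB n x = (if \<not> x (2*k+1) \<and> \<not> x (2*k+2) then 2*k+1 else 2*k)"
    unfolding DLB_def Let_def k_def by (subst if_not_P[OF False]) (rule refl)
  show ?thesis
  proof
    assume "2*m \<le> DLB n x"
    then have "m \<le> k" using D by (auto split: if_splits)
    then show "gok m x" using k2 unfolding gok_def by auto
  next
    assume "gok m x"
    then have "m \<le> k" using k1 unfolding gok_def by (meson not_le)
    then show "2*m \<le> DLB n x" using D by auto
  qed
qed

lemma D2:
  assumes "m < n div 2" "gok m x" "\<not> (x (2*m+1) \<and> x (2*m+2))"
  shows "DLB n x = (if \<not> x (2*m+1) \<and> \<not> x (2*m+2) then 2*m+1 else 2*m)"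
proof -
  have F: "\<not> (\<forall>l < n div 2. x (2*l+1) \<and> x (2*l+2))" using assms by auto
  have "(LEAST l. \<not> (x (2*l+1) \<and> x (2*l+2))) = m"
    apply (rule Least_equality) using assms unfolding gok_def by (auto simp: not_le[symmetric])
  then show ?thesis unfolding DLB_def Let_def by (subst if_not_P[OF F]) simp
qed

lemma D3:
  assumes "m < n div 2" "gok m x" "x (2*m+1)" "x (2*m+2)"
  shows "2*m+2 \<le> DLB n x"
proof (cases "\<forall>l < n div 2. x (2*l+1) \<and> x (2*l+2)")
  case True
  then show ?thesis using assms by (auto simp: DLB_def)
next
  case False
  define k where "k = (LEAST l. \<not> (x (2*l+1) \<and> x (2*l+2)))"
  have ex: "\<exists>l. \<not> (x (2*l+1) \<and> x (2*l+2))" using False by auto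
  have k1: "\<not> (x (2*k+1) \<and> x (2*k+2))" unfolding k_def by (rule LeastI_ex[OF ex])
  have D: "DLB n x = (if \<not> x (2*k+1) \<and> \<not> x (2*k+2) then 2*k+1 else 2*k)"
    unfolding DLB_def Let_def k_def by (subst if_not_P[OF False]) (rule refl)
  have "m < k"
  proof (rule ccontr)
    assume "\<not> m < k"
    then have "k < m \<or> k = m" by auto
    then show False using k1 assms unfolding gok_def by auto
  qed
  then show ?thesis using D by auto
qed


definition ind :: "bool \<Rightarrow> real" where "ind b = (if b then 1 else 0)"
definition rk :: "bool \<Rightarrow> bool \<Rightarrow> nat" where
  "rk u v = (if u \<and> v then 3 else if \<not> u \<and> \<not> v then 2 else 1)"
definition Wb :: "bool \<Rightarrow> bool \<Rightarrow> bool \<Rightarrow> bool \<Rightarrow> real" where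
  "Wb u v u' v' = (if rk u v > rk u' v' then ind u else if rk u' v' > rk u v then ind u'
                   else (ind u + ind u') / 2)"

lemma prob_bind_pmf:
  "measure_pmf.prob (bind_pmf M f) A = (\<integral>x. measure_pmf.prob (f x) A \<partial>M)"
  unfolding measure_pmf_bind
  by (rule measure_pmf.measure_bind[where N="count_space UNIV"]) (auto simp: measurable_pmf_measure1 space_subprob_algebra measure_pmf.subprob_space_axioms)

lemma prob_winner:
  "measure_pmf.prob (winner n x y) {z. z j} =
    (if DLB n x > DLB n y then ind (x j) else if DLB n y > DLB n x then ind (y j)
     else (ind (x j) + ind (y j)) / 2)"
proof -
  have h: "measure_pmf.prob (bernoulli_pmf (1/2)) {True} = 1/2"
          "measure_pmf.prob (bernoulli_pmf (1/2)) {False} = 1/2"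
    by (simp_all add: measure_pmf_single)
  have u: "measure_pmf.prob (bernoulli_pmf (1/2)) UNIV = 1" by simp
  have "measure_pmf.prob (map_pmf (\<lambda>b. if b then x else y) (bernoulli_pmf (1/2))) {z. z j}
     = measure_pmf.prob (bernoulli_pmf (1/2)) ((\<lambda>b. if b then x else y) -` {z. z j})" by simp
  also have "\<dots> = (ind (x j) + ind (y j)) / 2"
  proof (cases "x j"; cases "y j")
    assume "x j" "y j"
    then have "((\<lambda>b. if b then x else y) -` {z. z j}) = UNIV" by auto
    then show ?thesis using u \<open>x j\<close> \<open>y j\<close> by (simp add: ind_def)
  next
    assume "x j" "\<not> y j"
    then have "((\<lambda>b. if b then x else y) -` {z. z j}) = {True}" by auto
    then show ?thesis using h \<open>x j\<close> \<open>\<not> y j\<close> by (simp add: ind_def)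
  next
    assume "\<not> x j" "y j"
    then have "((\<lambda>b. if b then x else y) -` {z. z j}) = {False}" by auto
    then show ?thesis using h \<open>\<not> x j\<close> \<open>y j\<close> by (simp add: ind_def)
  next
    assume "\<not> x j" "\<not> y j"
    then have "((\<lambda>b. if b then x else y) -` {z. z j}) = {}" by auto
    then show ?thesis using \<open>\<not> x j\<close> \<open>\<not> y j\<close> by (simp add: ind_def)
  qed
  finally show ?thesis unfolding winner_def
    by (auto simp: measure_pmf_single ind_def)
qed

lemma prob_winner_Wb:
  assumes "m < n div 2" "gok m x" "gok m y"
  shows "measure_pmf.prob (winner n x y) {z. z (2*m+1)} =
          Wb (x (2*m+1)) (x (2*m+2)) (y (2*m+1)) (y (2*m+2))"
proof -
  have Dx: "(x (2*m+1) \<and> x (2*m+2) \<longrightarrow> 2*m+2 \<le> DLB n x) \<and>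
        (\<not> (x (2*m+1) \<and> x (2*m+2)) \<longrightarrow> DLB n x = (if \<not> x (2*m+1) \<and> \<not> x (2*m+2) then 2*m+1 else 2*m))"
    using D2[OF assms(1,2)] D3[OF assms(1,2)] by blast
  have Dy: "(y (2*m+1) \<and> y (2*m+2) \<longrightarrow> 2*m+2 \<le> DLB n y) \<and>
        (\<not> (y (2*m+1) \<and> y (2*m+2)) \<longrightarrow> DLB n y = (if \<not> y (2*m+1) \<and> \<not> y (2*m+2) then 2*m+1 else 2*m))"
    using D2[OF assms(1,3)] D3[OF assms(1,3)] by blast
  show ?thesis unfolding prob_winner Wb_def rk_def
    using Dx Dy by (cases "x (2*m+1)"; cases "x (2*m+2)"; cases "y (2*m+1)"; cases "y (2*m+2)") (auto simp: ind_def)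
qed


lemma gok_upd: "k > 2*m \<Longrightarrow> gok m (f(k := v)) = gok m f"
  unfolding gok_def by auto

definition FF :: "nat \<Rightarrow> nat \<Rightarrow> (nat \<Rightarrow> real) \<Rightarrow> (nat \<Rightarrow> bool) pmf" where
  "FF n m \<tau> = Pi_pmf ({1..n} - {2*m+1, 2*m+2}) False (\<lambda>i. bernoulli_pmf (\<tau> i))"

lemma split_freq:
  assumes "2*m+2 \<le> n"
  shows "map_pmf (\<lambda>x. (x (2*m+1), x (2*m+2), gok m x)) (freq_dist n \<tau>) =
         pair_pmf (bernoulli_pmf (\<tau> (2*m+1))) (pair_pmf (bernoulli_pmf (\<tau> (2*m+2))) (map_pmf (gok m) (FF n m \<tau>)))"
proof -
  define R where "R = {1..n} - {2*m+1, 2*m+2}"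
  have e: "{1..n} = insert (2*m+1) (insert (2*m+2) R)" using assms unfolding R_def by auto
  have fR: "finite R" "finite (insert (2*m+2) R)" unfolding R_def by auto
  have n1: "2*m+1 \<notin> insert (2*m+2) R" and n2: "2*m+2 \<notin> R" unfolding R_def by auto
  have "freq_dist n \<tau> = map_pmf (\<lambda>(y,f). f(2*m+1:=y)) (pair_pmf (bernoulli_pmf (\<tau> (2*m+1)))
       (map_pmf (\<lambda>(y,f). f(2*m+2:=y)) (pair_pmf (bernoulli_pmf (\<tau> (2*m+2))) (FF n m \<tau>))))"
    unfolding freq_dist_def FF_def R_def[symmetric] unfolding e
    by (simp only: Pi_pmf_insert[OF fR(2) n1] Pi_pmf_insert[OF fR(1) n2])
  then show ?thesis
    by (simp add: map_pmf_def pair_pmf_def bind_assoc_pmf bind_return_pmf gok_upd)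
qed

definition E3 :: "real \<Rightarrow> real \<Rightarrow> bool pmf \<Rightarrow> (bool \<times> bool \<times> bool \<Rightarrow> real) \<Rightarrow> real" where
  "E3 a t G k = (\<Sum>u\<in>UNIV. \<Sum>v\<in>UNIV. \<Sum>b\<in>UNIV. pmf (bernoulli_pmf a) u * pmf (bernoulli_pmf t) v * pmf G b * k (u,v,b))"

lemma L1:
  assumes "2*m+2 \<le> n"
  shows "(\<integral>x. k (x (2*m+1), x (2*m+2), gok m x) \<partial>freq_dist n \<tau>) =
     E3 (\<tau> (2*m+1)) (\<tau> (2*m+2)) (map_pmf (gok m) (FF n m \<tau>)) k"
proof -
  have "(\<integral>x. k (x (2*m+1), x (2*m+2), gok m x) \<partial>freq_dist n \<tau>) =
       (\<integral>w. k w \<partial>map_pmf (\<lambda>x. (x (2*m+1), x (2*m+2), gok m x)) (freq_dist n \<tau>))" by simp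
  also have "\<dots> = (\<integral>w. k w \<partial>pair_pmf (bernoulli_pmf (\<tau> (2*m+1))) (pair_pmf (bernoulli_pmf (\<tau> (2*m+2))) (map_pmf (gok m) (FF n m \<tau>))))"
    by (simp only: split_freq[OF assms])
  also have "\<dots> = (\<Sum>w\<in>UNIV. k w * pmf (pair_pmf (bernoulli_pmf (\<tau> (2*m+1))) (pair_pmf (bernoulli_pmf (\<tau> (2*m+2))) (map_pmf (gok m) (FF n m \<tau>)))) w)"
    by (rule integral_measure_pmf_real) auto
  also have "\<dots> = E3 (\<tau> (2*m+1)) (\<tau> (2*m+2)) (map_pmf (gok m) (FF n m \<tau>)) k"
    unfolding E3_def UNIV_Times_UNIV[symmetric] sum.cartesian_product[symmetric]
    by (simp add: pmf_pair UNIV_bool algebra_simps)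
  finally show ?thesis .
qed

lemma prob_tournament:
  "measure_pmf.prob (tournament n \<tau>) S =
    (\<integral>x. \<integral>y. measure_pmf.prob (winner n x y) {z. (x,y,z) \<in> S} \<partial>freq_dist n \<tau> \<partial>freq_dist n \<tau>)"
proof -
  have "\<And>x y. bind_pmf (winner n x y) (\<lambda>z. return_pmf (x,y,z)) = map_pmf (\<lambda>z. (x,y,z)) (winner n x y)"
    by (simp add: map_pmf_def)
  then show ?thesis unfolding tournament_def
    by (simp add: prob_bind_pmf vimage_def)
qed


lemma L2:
  assumes "2*m+2 \<le> n"
  shows "(\<integral>x. \<integral>y. (if gok m x \<and> gok m y then K (x (2*m+1)) (x (2*m+2)) (y (2*m+1)) (y (2*m+2)) else 0)
           \<partial>freq_dist n \<tau> \<partial>freq_dist n \<tau>) =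
    E3 (\<tau> (2*m+1)) (\<tau> (2*m+2)) (map_pmf (gok m) (FF n m \<tau>))
      (\<lambda>(u,v,b). E3 (\<tau> (2*m+1)) (\<tau> (2*m+2)) (map_pmf (gok m) (FF n m \<tau>))
         (\<lambda>(u',v',b'). if b \<and> b' then K u v u' v' else 0))"
proof -
  have inner: "(\<integral>y. (if gok m x \<and> gok m y then K (x (2*m+1)) (x (2*m+2)) (y (2*m+1)) (y (2*m+2)) else 0)
           \<partial>freq_dist n \<tau>) =
     E3 (\<tau> (2*m+1)) (\<tau> (2*m+2)) (map_pmf (gok m) (FF n m \<tau>))
         (\<lambda>(u',v',b'). if gok m x \<and> b' then K (x (2*m+1)) (x (2*m+2)) u' v' else 0)" for x
    using L1[OF assms, where k="\<lambda>(u',v',b'). if gok m x \<and> b' then K (x (2*m+1)) (x (2*m+2)) u' v' else 0" and \<tau>=\<tau>]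
    by (simp only: case_prod_conv)
  show ?thesis
    unfolding inner
    using L1[OF assms, where k="\<lambda>(u,v,b). E3 (\<tau> (2*m+1)) (\<tau> (2*m+2)) (map_pmf (gok m) (FF n m \<tau>))
         (\<lambda>(u',v',b'). if b \<and> b' then K u v u' v' else 0)" and \<tau>=\<tau>]
    by (simp only: case_prod_conv)
qed

lemma Pg_pos:
  assumes "2*m+2 \<le> n" "\<forall>i\<in>{1..n}. 0 < \<tau> i \<and> \<tau> i < 1"
  shows "pmf (map_pmf (gok m) (FF n m \<tau>)) True > 0"
proof -
  define R where "R = {1..n} - {2*m+1, 2*m+2}"
  define f0 where "f0 = (\<lambda>i. i \<in> R)"
  have fin: "finite R" unfolding R_def by auto
  have g0: "gok m f0" unfolding gok_def f0_def R_def using assms(1) by auto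
  have "pmf (FF n m \<tau>) f0 = (\<Prod>i\<in>R. pmf (bernoulli_pmf (\<tau> i)) (f0 i))"
    unfolding FF_def R_def[symmetric] by (rule pmf_Pi'[OF fin]) (simp add: f0_def)
  also have "\<dots> = (\<Prod>i\<in>R. \<tau> i)"
  proof (intro prod.cong refl)
    fix i assume "i \<in> R"
    then have "0 < \<tau> i" "\<tau> i < 1" "f0 i" using assms(2) by (auto simp: R_def f0_def)
    then show "pmf (bernoulli_pmf (\<tau> i)) (f0 i) = \<tau> i" by simp
  qed
  also have "\<dots> > 0" using assms(2) by (intro prod_pos) (auto simp: R_def)
  finally have p0: "pmf (FF n m \<tau>) f0 > 0" .
  have "pmf (FF n m \<tau>) f0 = measure_pmf.prob (FF n m \<tau>) {f0}" by (simp add: measure_pmf_single)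
  also have "\<dots> \<le> measure_pmf.prob (FF n m \<tau>) (gok m -` {True})"
    using g0 by (intro measure_pmf.finite_measure_mono) auto
  also have "\<dots> = pmf (map_pmf (gok m) (FF n m \<tau>)) True" by (simp add: pmf_map)
  finally show ?thesis using p0 by linarith
qed


definition E2 :: "real \<Rightarrow> real \<Rightarrow> (bool \<Rightarrow> bool \<Rightarrow> real) \<Rightarrow> real" where
  "E2 a t f = a*t*f True True + a*(1-t)*f True False + (1-a)*t*f False True + (1-a)*(1-t)*f False False"

lemma E3_E2:
  assumes "0 \<le> a" "a \<le> 1" "0 \<le> t" "t \<le> 1"
  shows "E3 a t G k = pmf G True * E2 a t (\<lambda>u v. k (u,v,True)) + (1 - pmf G True) * E2 a t (\<lambda>u v. k (u,v,False))"
  using assms unfolding E3_def E2_def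
  by (simp add: UNIV_bool pmf_False_conv_True[of G] algebra_simps)

lemma E2_Wb: "E2 a t (\<lambda>u v. E2 a t (\<lambda>u' v'. Wb u v u' v')) = p_fun a t"
  unfolding E2_def by (simp add: Wb_def rk_def ind_def p_fun_def power2_eq_square algebra_simps)

lemma E2_one: "E2 a t (\<lambda>u v. E2 a t (\<lambda>u' v'. 1)) = 1"
  unfolding E2_def by (simp add: algebra_simps)

lemma E2_zero: "E2 a t (\<lambda>u v. 0) = 0"
  unfolding E2_def by simp

lemma E2_cmult: "E2 a t (\<lambda>u v. c * f u v) = c * E2 a t f"
  unfolding E2_def by (simp add: algebra_simps)

lemma E3_nested:
  assumes "0 \<le> a" "a \<le> 1" "0 \<le> t" "t \<le> 1"
  shows "E3 a t G (\<lambda>(u,v,b). E3 a t G (\<lambda>(u',v',b'). if b \<and> b' then K u v u' v' else 0))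
     = (pmf G True)^2 * E2 a t (\<lambda>u v. E2 a t (\<lambda>u' v'. K u v u' v'))"
  by (simp only: E3_E2[OF assms] case_prod_conv if_True if_False simp_thms E2_zero E2_cmult mult_zero_right add_0_right power2_eq_square mult.assoc)


theorem lemma21:
  fixes n m :: nat and \<tau> :: "nat \<Rightarrow> real"
  assumes "even n" and "n > 0"
    and "1 \<le> m" and "m \<le> n div 2 - 1"
    and "\<forall>i\<in>{1..n}. \<tau> i \<in> {1 / real n, 1/2, 1 - 1 / real n}"
  shows "cond_prob (tournament n \<tau>)
           {(x, y, z). z (2*m+1)}
           {(x, y, z). min (DLB n x) (DLB n y) \<ge> 2*m}
         = p_fun (\<tau> (2*m+1)) (\<tau> (2*m+2))
       \<and> (\<tau> (2*m+1) \<in> {1/2, 1 - 1 / real n} \<and> \<tau> (2*m+2) \<in> {1/2, 1 - 1 / real n}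
         \<longrightarrow> p_fun (\<tau> (2*m+1)) (\<tau> (2*m+2)) \<ge> \<tau> (2*m+1))
       \<and> (\<tau> (2*m+1) = 1/2 \<and> \<tau> (2*m+2) \<in> {1/2, 1 - 1 / real n}
         \<longrightarrow> p_fun (\<tau> (2*m+1)) (\<tau> (2*m+2)) \<ge> 9/16)"
proof -
  have m0: "m < n div 2" "2*m+2 \<le> n" "4 \<le> n" using assms(1-4) by auto
  have n4: "real n \<ge> 4" using m0 by simp
  have inv: "1 / real n \<le> 1/4" using n4 by (simp add: divide_simps)
  have ipos: "1 / real n > 0" using n4 by simp
  have tb: "\<forall>i\<in>{1..n}. 0 < \<tau> i \<and> \<tau> i < 1"
  proof
    fix i assume "i \<in> {1..n}"
    then have "\<tau> i \<in> {1 / real n, 1/2, 1 - 1 / real n}" using assms(5) by blast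
    then show "0 < \<tau> i \<and> \<tau> i < 1" using inv ipos by auto
  qed
  define a where "a = \<tau> (2*m+1)"
  define t where "t = \<tau> (2*m+2)"
  have ab: "0 \<le> a" "a \<le> 1" "0 \<le> t" "t \<le> 1" using tb m0 unfolding a_def t_def
    by (metis atLeastAtMost_iff le_add2 less_eq_real_def add_leD1 one_add_one add.assoc)+
  define G where "G = map_pmf (gok m) (FF n m \<tau>)"
  have P0: "pmf G True > 0" unfolding G_def by (rule Pg_pos[OF m0(2) tb])
  have setAB: "{z. (x,y,z) \<in> {(x, y, z). z (2*m+1)} \<inter> {(x, y, z). min (DLB n x) (DLB n y) \<ge> 2*m}}
      = (if gok m x \<and> gok m y then {z. z (2*m+1)} else {})" for x y
    using D1[OF m0(1), of x] D1[OF m0(1), of y] by auto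
  have setB: "{z. (x,y,z) \<in> {(x, y, z). min (DLB n x) (DLB n y) \<ge> 2*m}}
      = (if gok m x \<and> gok m y then UNIV else {})" for x y
    using D1[OF m0(1), of x] D1[OF m0(1), of y] by auto
  have AB: "measure_pmf.prob (tournament n \<tau>) ({(x, y, z). z (2*m+1)} \<inter> {(x, y, z). min (DLB n x) (DLB n y) \<ge> 2*m})
     = (pmf G True)^2 * p_fun a t"
  proof -
    have "measure_pmf.prob (tournament n \<tau>) ({(x, y, z). z (2*m+1)} \<inter> {(x, y, z). min (DLB n x) (DLB n y) \<ge> 2*m})
       = (\<integral>x. \<integral>y. (if gok m x \<and> gok m y then Wb (x (2*m+1)) (x (2*m+2)) (y (2*m+1)) (y (2*m+2)) else 0)
           \<partial>freq_dist n \<tau> \<partial>freq_dist n \<tau>)"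
      unfolding prob_tournament setAB
      by (intro Bochner_Integration.integral_cong refl) (simp add: prob_winner_Wb[OF m0(1), simplified])
    also have "\<dots> = (pmf G True)^2 * p_fun a t"
      unfolding L2[OF m0(2)] G_def[symmetric] a_def[symmetric] t_def[symmetric]
      by (simp only: E3_nested[OF ab] E2_Wb)
    finally show ?thesis .
  qed
  have B: "measure_pmf.prob (tournament n \<tau>) {(x, y, z). min (DLB n x) (DLB n y) \<ge> 2*m}
     = (pmf G True)^2"
  proof -
    have "measure_pmf.prob (tournament n \<tau>) {(x, y, z). min (DLB n x) (DLB n y) \<ge> 2*m}
       = (\<integral>x. \<integral>y. (if gok m x \<and> gok m y then (\<lambda>_ _ _ _. 1::real) (x (2*m+1)) (x (2*m+2)) (y (2*m+1)) (y (2*m+2)) else 0)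
           \<partial>freq_dist n \<tau> \<partial>freq_dist n \<tau>)"
      unfolding prob_tournament setB
      by (intro Bochner_Integration.integral_cong refl) simp
    also have "\<dots> = (pmf G True)^2"
      unfolding L2[OF m0(2), where K="\<lambda>_ _ _ _. 1"] G_def[symmetric] a_def[symmetric] t_def[symmetric]
      by (simp only: E3_nested[OF ab] E2_one mult_1_right)
    finally show ?thesis .
  qed
  have part1: "cond_prob (tournament n \<tau>) {(x, y, z). z (2*m+1)} {(x, y, z). min (DLB n x) (DLB n y) \<ge> 2*m}
      = p_fun a t"
    unfolding cond_prob_def AB B using P0 by simp
  have t2: "t \<in> {1/2, 1 - 1/real n} \<Longrightarrow> 3*t - t^2 - 1 \<ge> 0"
  proof -
    assume "t \<in> {1/2, 1 - 1/real n}"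
    then have "t = 1/2 \<or> (3/4 \<le> t \<and> t \<le> 1)" using inv ipos by auto
    then show ?thesis
    proof
      assume "3/4 \<le> t \<and> t \<le> 1"
      then have "0 \<le> (t - 3/4) * (3/4 - t + 3/2)" by (intro mult_nonneg_nonneg) auto
      moreover have "(t - 3/4) * (3/4 - t + 3/2) = - (t^2) + 3*t - 27/16"
        by (simp add: power2_eq_square field_simps)
      ultimately show ?thesis by linarith
    next
      assume h12: "t = 1/2"
      show ?thesis unfolding h12 by (simp add: power2_eq_square)
    qed
  qed
  have part2: "a \<in> {1/2, 1 - 1/real n} \<and> t \<in> {1/2, 1 - 1/real n} \<longrightarrow> p_fun a t \<ge> a"
  proof
    assume h: "a \<in> {1/2, 1 - 1/real n} \<and> t \<in> {1/2, 1 - 1/real n}"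
    have "p_fun a t - a = a * (1 - a) * (3*t - t^2 - 1)"
      unfolding p_fun_def by (simp add: algebra_simps power2_eq_square)
    also have "\<dots> \<ge> 0" using t2 h ab by (intro mult_nonneg_nonneg) auto
    finally show "p_fun a t \<ge> a" by simp
  qed
  have part3: "a = 1/2 \<and> t \<in> {1/2, 1 - 1/real n} \<longrightarrow> p_fun a t \<ge> 9/16"
  proof
    assume h: "a = 1/2 \<and> t \<in> {1/2, 1 - 1/real n}"
    then have "t = 1/2 \<or> (3/4 \<le> t \<and> t \<le> 1)" using inv ipos by auto
    have ha: "a = 1/2" using h by simp
    have pf: "p_fun a t = (3*t - t^2 + 1) / 4" unfolding ha p_fun_def by (simp add: field_simps power2_eq_square)
    show "p_fun a t \<ge> 9/16"
    proof (cases "t = 1/2")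
      case True
      show ?thesis unfolding pf unfolding True by (simp add: power2_eq_square)
    next
      case False
      then have "3/4 \<le> t \<and> t \<le> 1" using \<open>t = 1/2 \<or> (3/4 \<le> t \<and> t \<le> 1)\<close> by blast
      then have "0 \<le> (t - 3/4) * (3/4 - t + 3/2)" by (intro mult_nonneg_nonneg) auto
      moreover have "(t - 3/4) * (3/4 - t + 3/2) = - (t^2) + 3*t - 27/16"
        by (simp add: power2_eq_square field_simps)
      ultimately have q: "0 \<le> - (t^2) + 3*t - 27/16" by argo
      show ?thesis unfolding pf using q by (simp add: field_simps)
    qed
  qed
  show ?thesis using part1 part2 part3 unfolding a_def t_def by blast
qed

end
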